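(* Let $M=M(\mathbb{1},\lambda,e,V)$ be the generic characteristic matrix of a $\mathbb{Z}^d$-periodic graph specialized at $z=\mathbb{1}=(1,\dots,1)$ (a symmetric $n\times n$ matrix). For any cycle cover $c$ of $[n]$ with $M_c\neq 0$, any monomial occurring in $M_c$ determines $c$: if a monomial (in $\lambda,e,V$) occurs in both $M_c$ and $M_{c'}$ for cycle covers $c,c'$ with $M_c,M_{c'}\neq 0$, then $c=c'$.
   Context: A $\mathbb{Z}^d$-periodic graph $\Gamma$ is a simple undirected graph of bounded degree with a free $\mathbb{Z}^d$-action by automorphisms, $(\alpha,v)\mapsto\alpha+v$, with finitely many vertex and edge orbits; $W$ is a set of orbit representatives of vertices, identified with $[n]=\{1,\dots,n\}$. The generic characteristic matrix is $M(z,\lambda,e,V)=\lambda I_n-H(z,e,V)$, where $H(z,e,V)$ has $(v,u)$ entry $\delta_{v,u}V(v)-\sum_{\alpha\in\mathbb{Z}^d: v\sim\alpha+u}e_{(v,\alpha+u)}z^\alpha$ with independent indeterminates $e$ (one per edge orbit, $e_{(u,v)}=e_{(v,u)}$) and $V(v)$ (one per $v\in W$). For $w\in S_n$, $|w|$ is the multigraph on $[n]$ with one edge $\{i,w(i)\}$ for each $i$ (fixed points give loops, 2-cycles give double edges); such a graph is a cycle cover of $[n]$. For a symmetric matrix $M=(f_{i,j})$ and a cycle cover $c$, $M_c$ denotes $M_w=f_{1,w(1)}\cdots f_{n,w(n)}$ for any $w$ with $|w|=c$ (this depends only on $c$). *)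

theory Defs
  imports "HOL-Analysis.Finite_Cartesian_Product" "HOL-Library.Poly_Mapping"
          "HOL-Library.Multiset" "HOL-Combinatorics.Permutations"
begin

text \<open>Vertices of a Z^d-periodic graph with vertex orbit representatives W = {0..<n}:
  the vertex alpha + v is encoded as the pair (alpha, v).\<close>
type_synonym 'd vertex = "(int ^ 'd) \<times> nat"

definition translate :: "int ^ ('d::finite) \<Rightarrow> 'd vertex \<Rightarrow> 'd vertex" where
  "translate \<beta> x = (\<beta> + fst x, snd x)"

definition periodic_graph :: "nat \<Rightarrow> (('d::finite) vertex \<Rightarrow> 'd vertex \<Rightarrow> bool) \<Rightarrow> bool" where
  "periodic_graph n adj \<longleftrightarrow>
     (\<forall>x y. adj x y \<longrightarrow> snd x < n \<and> snd y < n) \<and>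
     (\<forall>x y. adj x y \<longleftrightarrow> adj y x) \<and>
     (\<forall>x. \<not> adj x x) \<and>
     (\<forall>\<beta> x y. adj (translate \<beta> x) (translate \<beta> y) \<longleftrightarrow> adj x y) \<and>
     finite {(v, \<alpha>, u). adj (0, v) (\<alpha>, u)}"

definition edge_orbit :: "('d::finite) vertex \<Rightarrow> 'd vertex \<Rightarrow> 'd vertex set set" where
  "edge_orbit x y = {{translate \<beta> x, translate \<beta> y} | \<beta>. True}"

datatype ('d::finite) indet = Lam | Vpot nat | Eorb "'d vertex set set"

type_synonym 'd monomial = "'d indet \<Rightarrow>\<^sub>0 nat"
type_synonym 'd mpoly = "'d monomial \<Rightarrow>\<^sub>0 int"

definition Var :: "('d::finite) indet \<Rightarrow> 'd mpoly" where
  "Var x = Poly_Mapping.single (Poly_Mapping.single x 1) 1"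

text \<open>Entry (v,u) of M(1,lambda,e,V) = lambda I - H(1,e,V).\<close>
definition charM1 :: "(('d::finite) vertex \<Rightarrow> 'd vertex \<Rightarrow> bool) \<Rightarrow> nat \<Rightarrow> nat \<Rightarrow> 'd mpoly" where
  "charM1 adj v u =
     (if v = u then Var Lam - Var (Vpot v) else 0) +
     (\<Sum>\<alpha>\<in>{\<alpha>. adj (0, v) (\<alpha>, u)}. Var (Eorb (edge_orbit (0, v) (\<alpha>, u))))"

definition Mperm :: "(('d::finite) vertex \<Rightarrow> 'd vertex \<Rightarrow> bool) \<Rightarrow> nat \<Rightarrow> (nat \<Rightarrow> nat) \<Rightarrow> 'd mpoly" where
  "Mperm adj n w = (\<Prod>i<n. charM1 adj i (w i))"

text \<open>The cycle cover |w|: multiset of edges {i, w i} (loops are singletons,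
  2-cycles give a double edge).\<close>
definition cycle_cover :: "nat \<Rightarrow> (nat \<Rightarrow> nat) \<Rightarrow> nat set multiset" where
  "cycle_cover n w = image_mset (\<lambda>i. {i, w i}) (mset_set {..<n})"

end

theory Submission
  imports Defs
begin

lemma keys_prod_choice:
  fixes f :: "'a \<Rightarrow> ('b \<Rightarrow>\<^sub>0 nat) \<Rightarrow>\<^sub>0 int"
  assumes "finite A"
  shows "k \<in> Poly_Mapping.keys (\<Prod>i\<in>A. f i) \<Longrightarrow>
     \<exists>g. (\<forall>i\<in>A. g i \<in> Poly_Mapping.keys (f i)) \<and> k = (\<Sum>i\<in>A. g i)"
  using assms
proof (induction A arbitrary: k rule: finite_induct)
  case empty
  then show ?case by simp
next
  case (insert x F)
  then have "k \<in> Poly_Mapping.keys (f x * (\<Prod>i\<in>F. f i))" by simp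
  then obtain a b where ab: "k = a + b" "a \<in> Poly_Mapping.keys (f x)"
      "b \<in> Poly_Mapping.keys (\<Prod>i\<in>F. f i)"
    using keys_mult by blast
  obtain g where g: "\<forall>i\<in>F. g i \<in> Poly_Mapping.keys (f i)" "b = (\<Sum>i\<in>F. g i)"
    using insert(3)[OF ab(3)] by blast
  have s: "(\<Sum>i\<in>F. (g(x:=a)) i) = (\<Sum>i\<in>F. g i)"
    by (rule sum.cong) (use insert(2) in auto)
  show ?case
    by (rule exI[of _ "g(x:=a)"]) (use g ab insert(1,2) s in auto)
qed

fun lab :: "('d::finite) indet \<Rightarrow> nat set option" where
  "lab Lam = None"
| "lab (Vpot v) = Some {v}"
| "lab (Eorb E) = Some (snd ` (SOME T. T \<in> E))"

lemma lab_edge: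
  fixes \<alpha> :: "int ^ ('d::finite)"
  shows "lab (Eorb (edge_orbit (0, i) (\<alpha>, j))) = Some {i, j}"
proof -
  let ?E = "edge_orbit (0, i) (\<alpha>, j)"
  have "{translate 0 (0, i), translate 0 (\<alpha>, j)} \<in> ?E"
    unfolding edge_orbit_def by blast
  then have "(SOME T. T \<in> ?E) \<in> ?E" by (rule someI)
  then obtain \<beta> where "(SOME T. T \<in> ?E) = {translate \<beta> (0, i), translate \<beta> (\<alpha>, j)}"
    unfolding edge_orbit_def by blast
  then show ?thesis by (simp add: translate_def)
qed

definition cnt :: "('d::finite) monomial \<Rightarrow> nat set \<Rightarrow> nat" where
  "cnt m S = (\<Sum>x\<in>Poly_Mapping.keys m. if lab x = Some S then Poly_Mapping.lookup m x else 0)"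

lemma cnt_superset:
  assumes "finite X" "Poly_Mapping.keys m \<subseteq> X"
  shows "cnt m S = (\<Sum>x\<in>X. if lab x = Some S then Poly_Mapping.lookup m x else 0)"
  unfolding cnt_def
  by (rule sum.mono_neutral_left) (use assms in \<open>auto simp: in_keys_iff\<close>)

lemma cnt_add: "cnt (a + b) S = cnt a S + cnt b S"
proof -
  let ?X = "Poly_Mapping.keys a \<union> Poly_Mapping.keys b"
  have f: "finite ?X" by simp
  have "cnt (a + b) S = (\<Sum>x\<in>?X. if lab x = Some S then Poly_Mapping.lookup (a+b) x else 0)"
    by (rule cnt_superset[OF f]) (rule keys_add)
  also have "\<dots> = (\<Sum>x\<in>?X. if lab x = Some S then Poly_Mapping.lookup a x else 0)
     + (\<Sum>x\<in>?X. if lab x = Some S then Poly_Mapping.lookup b x else 0)"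
    unfolding sum.distrib[symmetric] by (rule sum.cong) (auto simp: lookup_add)
  also have "\<dots> = cnt a S + cnt b S"
    using cnt_superset[OF f, of a S] cnt_superset[OF f, of b S] by auto
  finally show ?thesis .
qed

lemma cnt_zero: "cnt 0 S = 0" by (simp add: cnt_def)

lemma cnt_sum: "cnt (\<Sum>i\<in>A. g i) S = (\<Sum>i\<in>A. cnt (g i) S)"
  by (induction A rule: infinite_finite_induct) (auto simp: cnt_zero cnt_add)

lemma cnt_single: "cnt (Poly_Mapping.single x 1) S = (if lab x = Some S then 1 else 0)"
  by (simp add: cnt_def)

lemma keys_Var: "Poly_Mapping.keys (Var x) = {Poly_Mapping.single x 1}"
  by (simp add: Var_def)

lemma entry_keys:
  assumes "k \<in> Poly_Mapping.keys (charM1 adj i j)"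
  shows "(k = Poly_Mapping.single Lam 1 \<and> i = j) \<or> (\<exists>x. k = Poly_Mapping.single x 1 \<and> lab x = Some {i, j})"
proof -
  have "k \<in> Poly_Mapping.keys (if i = j then Var Lam - Var (Vpot i) else 0) \<or>
        k \<in> Poly_Mapping.keys (\<Sum>\<alpha>\<in>{\<alpha>. adj (0, i) (\<alpha>, j)}. Var (Eorb (edge_orbit (0, i) (\<alpha>, j))))"
  proof -
    have "k \<in> Poly_Mapping.keys ((if i = j then Var Lam - Var (Vpot i) else 0) +
        (\<Sum>\<alpha>\<in>{\<alpha>. adj (0, i) (\<alpha>, j)}. Var (Eorb (edge_orbit (0, i) (\<alpha>, j)))))"
      using assms by (simp only: charM1_def)
    then show ?thesis by (rule UnE[OF subsetD[OF keys_add]]) blast+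
  qed
  then show ?thesis
  proof
    assume "k \<in> Poly_Mapping.keys (if i = j then Var Lam - Var (Vpot i) else 0)"
    then have "i = j" "k \<in> Poly_Mapping.keys (Var Lam - Var (Vpot i))"
      by (auto split: if_splits)
    then have "k \<in> Poly_Mapping.keys (Var Lam) \<union> Poly_Mapping.keys (Var (Vpot i))"
      using keys_diff[of "Var Lam" "Var (Vpot i)"] by blast
    then have "k = Poly_Mapping.single Lam 1 \<or> k = Poly_Mapping.single (Vpot i) 1"
      unfolding keys_Var by blast
    then show ?thesis
    proof
      assume "k = Poly_Mapping.single Lam 1" then show ?thesis using \<open>i = j\<close> by blast
    next
      assume "k = Poly_Mapping.single (Vpot i) 1"
      then show ?thesis using \<open>i = j\<close> by (intro disjI2 exI[of _ "Vpot i"]) simp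
    qed
  next
    assume kS: "k \<in> Poly_Mapping.keys (\<Sum>\<alpha>\<in>{\<alpha>. adj (0, i) (\<alpha>, j)}. Var (Eorb (edge_orbit (0, i) (\<alpha>, j))))"
    then obtain \<alpha> where "k = Poly_Mapping.single (Eorb (edge_orbit (0, i) (\<alpha>, j))) 1"
    proof -
      assume h: "\<And>\<alpha>. k = Poly_Mapping.single (Eorb (edge_orbit (0, i) (\<alpha>, j))) 1 \<Longrightarrow> thesis"
      from subsetD[OF keys_sum kS] obtain \<alpha> where "k \<in> Poly_Mapping.keys (Var (Eorb (edge_orbit (0, i) (\<alpha>, j))))"
        by blast
      then show thesis using h unfolding keys_Var by blast
    qed
    then show ?thesis using lab_edge by blast
  qed
qed

lemma single_inj1:
  assumes h: "Poly_Mapping.single x (1::nat) = Poly_Mapping.single y 1"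
  shows "x = y"
proof (rule ccontr)
  assume "x \<noteq> y"
  have "Poly_Mapping.lookup (Poly_Mapping.single x (1::nat)) x = 1" by simp
  moreover have "Poly_Mapping.lookup (Poly_Mapping.single y (1::nat)) x = 0"
    using \<open>x \<noteq> y\<close> lookup_single_not_eq[of y x] by auto
  moreover from h have "Poly_Mapping.lookup (Poly_Mapping.single x (1::nat)) x = Poly_Mapping.lookup (Poly_Mapping.single y 1) x"
    by (rule arg_cong)
  ultimately show False by linarith
qed

definition Lof :: "('d::finite) monomial \<Rightarrow> nat \<Rightarrow> nat set" where
  "Lof m n = {i. i < n \<and> (\<forall>S. cnt m S > 0 \<longrightarrow> i \<notin> S)}"

lemma count_img: "finite A \<Longrightarrow> count (image_mset f (mset_set A)) x = (\<Sum>i\<in>A. if f i = x then 1 else 0)"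
  by (induction A rule: finite_induct) auto

lemma main_count:
  fixes adj :: "('d::finite) vertex \<Rightarrow> 'd vertex \<Rightarrow> bool"
  assumes w: "w permutes {..<n}"
    and m: "m \<in> Poly_Mapping.keys (Mperm adj n w)"
  shows "count (cycle_cover n w) S = cnt m S + (\<Sum>i\<in>Lof m n. if {i} = S then 1 else 0)"
proof -
  obtain g where g: "\<forall>i\<in>{..<n}. g i \<in> Poly_Mapping.keys (charM1 adj i (w i))"
    and msum: "m = (\<Sum>i\<in>{..<n}. g i)"
    using keys_prod_choice[of "{..<n}" m "\<lambda>i. charM1 adj i (w i)"] m unfolding Mperm_def by auto
  define L where "L = {i\<in>{..<n}. g i = Poly_Mapping.single Lam 1}"
  have A: "\<And>i. i \<in> L \<Longrightarrow> w i = i"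
  proof -
    fix i assume "i \<in> L"
    then have "i < n" "g i = Poly_Mapping.single Lam 1" by (auto simp: L_def)
    moreover have "g i \<in> Poly_Mapping.keys (charM1 adj i (w i))" using g \<open>i < n\<close> by auto
    ultimately show "w i = i" using entry_keys[of "g i" adj i "w i"]
      by (metis lab.simps(1) option.distinct(1) single_inj1)
  qed
  have B: "\<And>i. i < n \<Longrightarrow> i \<notin> L \<Longrightarrow> \<exists>x. g i = Poly_Mapping.single x 1 \<and> lab x = Some {i, w i}"
    using entry_keys g unfolding L_def by blast
  have cntg: "\<And>i. i < n \<Longrightarrow> cnt (g i) S' = (if i \<in> L then 0 else if {i, w i} = S' then 1 else 0)" for S'
  proof -
    fix i assume i: "i < n"
    show "cnt (g i) S' = (if i \<in> L then 0 else if {i, w i} = S' then 1 else 0)"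
    proof (cases "i \<in> L")
      case True
      then show ?thesis using cnt_single[of Lam S'] by (auto simp: L_def)
    next
      case False
      then obtain x where "g i = Poly_Mapping.single x 1" "lab x = Some {i, w i}" using B i by blast
      then show ?thesis using False cnt_single[of x S'] by auto
    qed
  qed
  have fin: "finite L" "L \<subseteq> {..<n}" by (auto simp: L_def)
  have cm: "cnt m S' = (\<Sum>i\<in>{..<n}-L. if {i, w i} = S' then 1 else 0)" for S'
  proof -
    have "cnt m S' = (\<Sum>i\<in>{..<n}. if i \<in> L then 0 else if {i, w i} = S' then 1 else 0)"
      unfolding msum cnt_sum by (rule sum.cong) (auto simp: cntg)
    also have "\<dots> = (\<Sum>i\<in>{..<n}-L. if {i, w i} = S' then 1 else 0)"
      by (rule sum.mono_neutral_cong_right) auto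
    finally show ?thesis .
  qed
  have LL: "Lof m n = L"
  proof
    show "Lof m n \<subseteq> L"
    proof
      fix i assume "i \<in> Lof m n"
      then have i: "i < n" and h: "\<And>S. cnt m S > 0 \<Longrightarrow> i \<notin> S" by (auto simp: Lof_def)
      show "i \<in> L"
      proof (rule ccontr)
        assume "i \<notin> L"
        then have iD: "i \<in> {..<n} - L" using i by simp
        have "(1::nat) \<le> (\<Sum>j\<in>{..<n} - L. if {j, w j} = {i, w i} then 1 else 0)"
          using member_le_sum[OF iD, of "\<lambda>j. if {j, w j} = {i, w i} then 1 else (0::nat)"] by simp
        then have "cnt m {i, w i} > 0" unfolding cm by simp
        then show False using h by blast
      qed
    qed
  next
    show "L \<subseteq> Lof m n"
    proof
      fix i assume iL: "i \<in> L"
      have nS: "i \<notin> S" if "cnt m S > 0" for S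
      proof
        assume iS: "i \<in> S"
        from that have "(\<Sum>j\<in>{..<n} - L. if {j, w j} = S then 1 else (0::nat)) \<noteq> 0"
          unfolding cm by (simp only: neq0_conv)
        then obtain j where j0: "j \<in> {..<n} - L" "(if {j, w j} = S then 1 else (0::nat)) \<noteq> 0"
          by (rule sum.not_neutral_contains_not_neutral)
        then have j: "j \<in> {..<n} - L" "{j, w j} = S" by (auto split: if_splits)
        have "j \<noteq> i" using j iL by auto
        moreover have "w j \<noteq> w i" using \<open>j \<noteq> i\<close> permutes_inj[OF w] unfolding inj_def by blast
        moreover from iS j(2) have "i = j \<or> i = w j" by blast
        ultimately show False using A[OF iL] by auto
      qed
      have "i < n" using iL fin(2) by blast
      then show "i \<in> Lof m n" unfolding Lof_def using nS by blast
    qed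
  qed
  have "count (cycle_cover n w) S = (\<Sum>i\<in>{..<n}. if {i, w i} = S then 1 else 0)"
    unfolding cycle_cover_def by (simp add: count_img)
  also have "\<dots> = (\<Sum>i\<in>{..<n}-L. if {i, w i} = S then 1 else 0) + (\<Sum>i\<in>L. if {i, w i} = S then 1 else 0)"
    by (rule sum.subset_diff[OF fin(2)]) simp
  also have "(\<Sum>i\<in>L. if {i, w i} = S then 1 else 0) = (\<Sum>i\<in>L. if {i} = S then 1 else (0::nat))"
    by (rule sum.cong) (auto simp: A)
  finally show ?thesis by (simp only: cm LL)
qed

theorem lemma2p3:
  fixes adj :: "('d::finite) vertex \<Rightarrow> 'd vertex \<Rightarrow> bool"
    and n :: nat and w w' :: "nat \<Rightarrow> nat" and m :: "'d monomial"
  assumes "periodic_graph n adj"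
    and "w permutes {..<n}" and "w' permutes {..<n}"
    and "Mperm adj n w \<noteq> 0" and "Mperm adj n w' \<noteq> 0"
    and "Poly_Mapping.lookup (Mperm adj n w) m \<noteq> 0" and "Poly_Mapping.lookup (Mperm adj n w') m \<noteq> 0"
  shows "cycle_cover n w = cycle_cover n w'"
proof (rule multiset_eqI)
  fix S
  show "count (cycle_cover n w) S = count (cycle_cover n w') S"
    using main_count[OF assms(2), of m adj S] main_count[OF assms(3), of m adj S] assms(6,7)
    by (simp add: in_keys_iff)
qed

end
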